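(* Let $K$ be a field, $\Lambda=(KQ/\langle I\rangle,|\cdot|)$ a graded pinched gentle algebra, $(\alpha,\beta)$ an acyclic graded Kronecker of $\Lambda$ with source $1$ and target $2$, $\mu\in K^*$, and $B=(P_2[|\alpha|]\oplus P_1[1],\partial=\begin{pmatrix}0&\alpha+\mu\beta\\0&0\end{pmatrix})\in\mathcal{P}(\Lambda)^{pre-tr}$. Then $H^*\mathrm{End}_{\mathcal{P}(\Lambda)^{pre-tr}}(B)\simeq K[x]/(x^2)$, where $x$ is of degree $1$.
   Context: Paths in $Q$ are composed right to left; $e_a$ trivial path, $P_a=e_a\Lambda$. Graded pinched gentle: $Q_1=Q_1^g\sqcup Q_1^p$, $I=I^g\sqcup I^p$, $(Q^g,\langle I^g\rangle)$ gentle (each vertex at most two incoming/outgoing arrows; $I^g$ paths of length two with, for each arrow $\alpha$, at most one arrow $\beta$ with $\alpha\beta$ a path in $I^g$, at most one $\gamma$ with $\gamma\alpha$ in $I^g$, at most one $\beta'$ with $\alpha\beta'$ a path not in $I^g$, at most one $\gamma'$ with $\gamma'\alpha$ not in $I^g$), $Q_1^p$ degree-zero loops at distinct vertices, and for each $v$ with loop $\gamma_v$, arrows $\alpha_v^\pm,\beta_v^\pm$ of $Q^g$ at $v$ with $\beta_v^+\alpha_v^-,\alpha_v^+\beta_v^-\in I^g$ give $I^p=\{\beta_v^+(\gamma_v+e_v),(\gamma_v+e_v)\beta_v^-,\alpha_v^+(\gamma_v-e_v),(\gamma_v-e_v)\alpha_v^-\}$. Graded Kronecker: arrows $\alpha,\beta$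 of $Q^g$, not loops, common source $1$, common target $2$, $|\alpha|=|\beta|$, no loop of $Q_1^p$ at $1$ or $2$; acyclic: $\alpha,\beta$ not on an oriented cycle of $(Q^g,I^g)$. $\mathcal{P}(\Lambda)$ is the DG category with objects $Q_0$ (vertex $i$ written $P_i$), $\mathrm{Hom}(i,j)=e_j\Lambda e_i$ graded, zero differential. $\mathcal{P}(\Lambda)^{pre-tr}$ (one-sided twisted complexes): objects $(\bigoplus_iC_i[r_i],\partial)$ with $\partial$ strictly upper triangular, entries $\partial_{ij}\in\mathrm{Hom}(C_j,C_i)$ of degree $r_i-r_j+1$, $d_{naive}\partial+\partial^2=0$; morphisms are matrices of morphisms, an entry $b:C_l\to C'_k$ having degree $|b|+r_l-r'_k$; composition by matrix multiplication; $df=d_{naive}f+\partial'f-(-1)^lf\partial$ for $f$ of degree $l$. *)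

theory Defs
  imports Main
begin

record ('v,'a) gquiver =
  qV :: "'v set"
  qA :: "'a set"
  qs :: "'a \<Rightarrow> 'v"
  qt :: "'a \<Rightarrow> 'v"
  qdeg :: "'a \<Rightarrow> int"

text \<open>A path is a pair (source vertex, list of arrows). Paths are composed right to
left: the list [a_n, ..., a_1] is the path a_n ... a_1 (a_1 is traversed first).
The empty list at vertex v is the trivial path e_v.\<close>
type_synonym ('v,'a) path = "'v \<times> 'a list"

definition valid_path :: "('v,'a,'c) gquiver_scheme \<Rightarrow> ('v,'a) path \<Rightarrow> bool" where
  "valid_path Q p \<longleftrightarrow> fst p \<in> qV Q \<and> set (snd p) \<subseteq> qA Q \<and>
     (snd p \<noteq> [] \<longrightarrow> qs Q (last (snd p)) = fst p) \<and>
     (\<forall>i. Suc i < length (snd p) \<longrightarrow> qs Q (snd p ! i) = qt Q (snd p ! Suc i))"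

definition psrc :: "('v,'a) path \<Rightarrow> 'v" where
  "psrc p = fst p"

definition ptgt :: "('v,'a,'c) gquiver_scheme \<Rightarrow> ('v,'a) path \<Rightarrow> 'v" where
  "ptgt Q p = (if snd p = [] then fst p else qt Q (hd (snd p)))"

definition pdeg :: "('v,'a,'c) gquiver_scheme \<Rightarrow> ('v,'a) path \<Rightarrow> int" where
  "pdeg Q p = sum_list (map (qdeg Q) (snd p))"

text \<open>Elements of KQ: finitely supported K-valued functions on valid paths.\<close>
type_synonym ('v,'a,'k) kq = "('v,'a) path \<Rightarrow> 'k"

definition in_KQ :: "('v,'a,'c) gquiver_scheme \<Rightarrow> ('v,'a,'k::zero) kq \<Rightarrow> bool" where
  "in_KQ Q f \<longleftrightarrow> finite {p. f p \<noteq> 0} \<and> (\<forall>p. f p \<noteq> 0 \<longrightarrow> valid_path Q p)"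

definition kq_zero :: "('v,'a,'k::zero) kq" where
  "kq_zero = (\<lambda>p. 0)"

definition kq_add :: "('v,'a,'k::plus) kq \<Rightarrow> ('v,'a,'k) kq \<Rightarrow> ('v,'a,'k) kq" where
  "kq_add f g = (\<lambda>p. f p + g p)"

definition kq_diff :: "('v,'a,'k::minus) kq \<Rightarrow> ('v,'a,'k) kq \<Rightarrow> ('v,'a,'k) kq" where
  "kq_diff f g = (\<lambda>p. f p - g p)"

definition kq_smult :: "'k::times \<Rightarrow> ('v,'a,'k) kq \<Rightarrow> ('v,'a,'k) kq" where
  "kq_smult c f = (\<lambda>p. c * f p)"

definition path_elem :: "('v,'a) path \<Rightarrow> ('v,'a,'k::{zero,one}) kq" where
  "path_elem p = (\<lambda>q. if q = p then 1 else 0)"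

text \<open>Multiplication: the path p composed after q (written p q) is concatenation
when the source of p is the target of q, and 0 otherwise (extended bilinearly).\<close>
definition kq_mult :: "('v,'a,'c) gquiver_scheme \<Rightarrow> ('v,'a,'k::comm_semiring_1) kq
    \<Rightarrow> ('v,'a,'k) kq \<Rightarrow> ('v,'a,'k) kq" where
  "kq_mult Q f g = (\<lambda>(v, xs). \<Sum>i\<in>{0..length xs}.
      f (ptgt Q (v, drop i xs), take i xs) * g (v, drop i xs))"

inductive_set kq_ideal :: "('v,'a,'c) gquiver_scheme \<Rightarrow> ('v,'a,'k::comm_ring_1) kq set
    \<Rightarrow> ('v,'a,'k) kq set"
  for Q :: "('v,'a,'c) gquiver_scheme" and R :: "('v,'a,'k) kq set" where
  zero: "kq_zero \<in> kq_ideal Q R"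
| gen: "r \<in> R \<Longrightarrow> in_KQ Q x \<Longrightarrow> in_KQ Q y \<Longrightarrow> kq_mult Q (kq_mult Q x r) y \<in> kq_ideal Q R"
| add: "f \<in> kq_ideal Q R \<Longrightarrow> g \<in> kq_ideal Q R \<Longrightarrow> kq_add f g \<in> kq_ideal Q R"

text \<open>Homogeneous elements of e_j KQ e_i of degree n (representatives of Hom(P_i,P_j)
in degree n of the graded algebra KQ/<R>).\<close>
definition kq_hom :: "('v,'a,'c) gquiver_scheme \<Rightarrow> 'v \<Rightarrow> 'v \<Rightarrow> int \<Rightarrow> ('v,'a,'k::zero) kq set" where
  "kq_hom Q i j n = {f. in_KQ Q f \<and>
     (\<forall>p. f p \<noteq> 0 \<longrightarrow> psrc p = i \<and> ptgt Q p = j \<and> pdeg Q p = n)}"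

section \<open>Graded pinched gentle algebras\<close>

text \<open>Q is the whole quiver; its arrows are Ag (the arrows of Q^g) together with the
degree-zero loops gam v at the vertices v in Lv (the arrows of Q^p). Ig is the set of
relations of Q^g: a pair (x, y) stands for the length-two path x y (y then x).
alp, alm, bep, bem are the arrows alpha_v^+, alpha_v^-, beta_v^+, beta_v^- at v.\<close>
definition graded_pinched_gentle ::
  "('v,'a,'c) gquiver_scheme \<Rightarrow> 'a set \<Rightarrow> 'v set \<Rightarrow> ('v \<Rightarrow> 'a) \<Rightarrow>
   ('v \<Rightarrow> 'a) \<Rightarrow> ('v \<Rightarrow> 'a) \<Rightarrow> ('v \<Rightarrow> 'a) \<Rightarrow> ('v \<Rightarrow> 'a) \<Rightarrow> ('a \<times> 'a) set \<Rightarrow> bool" where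
  "graded_pinched_gentle Q Ag Lv gam alp alm bep bem Ig \<longleftrightarrow>
     finite (qV Q) \<and> finite (qA Q) \<and>
     (\<forall>x\<in>qA Q. qs Q x \<in> qV Q \<and> qt Q x \<in> qV Q) \<and>
     qA Q = Ag \<union> gam ` Lv \<and> Ag \<inter> gam ` Lv = {} \<and> Lv \<subseteq> qV Q \<and>
     \<comment> \<open>Q^p: degree-zero loops at distinct vertices\<close>
     inj_on gam Lv \<and>
     (\<forall>v\<in>Lv. qs Q (gam v) = v \<and> qt Q (gam v) = v \<and> qdeg Q (gam v) = 0) \<and>
     \<comment> \<open>(Q^g, <I^g>) gentle\<close>
     (\<forall>v\<in>qV Q. card {x\<in>Ag. qt Q x = v} \<le> 2 \<and> card {x\<in>Ag. qs Q x = v} \<le> 2) \<and>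
     Ig \<subseteq> {(x, y). x \<in> Ag \<and> y \<in> Ag \<and> qs Q x = qt Q y} \<and>
     (\<forall>x\<in>Ag. card {y\<in>Ag. qs Q x = qt Q y \<and> (x, y) \<in> Ig} \<le> 1) \<and>
     (\<forall>x\<in>Ag. card {y\<in>Ag. qs Q y = qt Q x \<and> (y, x) \<in> Ig} \<le> 1) \<and>
     (\<forall>x\<in>Ag. card {y\<in>Ag. qs Q x = qt Q y \<and> (x, y) \<notin> Ig} \<le> 1) \<and>
     (\<forall>x\<in>Ag. card {y\<in>Ag. qs Q y = qt Q x \<and> (y, x) \<notin> Ig} \<le> 1) \<and>
     \<comment> \<open>the arrows alpha_v^+-, beta_v^+- of Q^g at a vertex v carrying a loop of Q^p\<close>
     (\<forall>v\<in>Lv. alp v \<in> Ag \<and> alm v \<in> Ag \<and> bep v \<in> Ag \<and> bem v \<in> Ag \<and>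
        qs Q (alp v) = v \<and> qs Q (bep v) = v \<and> qt Q (alm v) = v \<and> qt Q (bem v) = v \<and>
        alp v \<noteq> bep v \<and> alm v \<noteq> bem v \<and>
        (bep v, alm v) \<in> Ig \<and> (alp v, bem v) \<in> Ig)"

text \<open>The generating set I = I^g \<union> I^p of the ideal, as elements of KQ.\<close>
definition pg_rels ::
  "('v,'a,'c) gquiver_scheme \<Rightarrow> 'v set \<Rightarrow> ('v \<Rightarrow> 'a) \<Rightarrow>
   ('v \<Rightarrow> 'a) \<Rightarrow> ('v \<Rightarrow> 'a) \<Rightarrow> ('v \<Rightarrow> 'a) \<Rightarrow> ('v \<Rightarrow> 'a) \<Rightarrow> ('a \<times> 'a) set \<Rightarrow>
   ('v,'a,'k::comm_ring_1) kq set" where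
  "pg_rels Q Lv gam alp alm bep bem Ig =
     {path_elem (qs Q y, [x, y]) | x y. (x, y) \<in> Ig} \<union>
     (\<Union>v\<in>Lv.
       { kq_add (path_elem (v, [bep v, gam v])) (path_elem (v, [bep v])),
         kq_add (path_elem (qs Q (bem v), [gam v, bem v])) (path_elem (qs Q (bem v), [bem v])),
         kq_diff (path_elem (v, [alp v, gam v])) (path_elem (v, [alp v])),
         kq_diff (path_elem (qs Q (alm v), [gam v, alm v])) (path_elem (qs Q (alm v), [alm v])) })"

definition graded_kronecker ::
  "('v,'a,'c) gquiver_scheme \<Rightarrow> 'a set \<Rightarrow> 'v set \<Rightarrow> 'a \<Rightarrow> 'a \<Rightarrow> 'v \<Rightarrow> 'v \<Rightarrow> bool" where
  "graded_kronecker Q Ag Lv al be v1 v2 \<longleftrightarrow>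
     al \<in> Ag \<and> be \<in> Ag \<and> al \<noteq> be \<and>
     qs Q al \<noteq> qt Q al \<and> qs Q be \<noteq> qt Q be \<and>
     qs Q al = v1 \<and> qs Q be = v1 \<and> qt Q al = v2 \<and> qt Q be = v2 \<and>
     qdeg Q al = qdeg Q be \<and> v1 \<notin> Lv \<and> v2 \<notin> Lv"

definition oriented_cycle_g ::
  "('v,'a,'c) gquiver_scheme \<Rightarrow> 'a set \<Rightarrow> ('a \<times> 'a) set \<Rightarrow> 'a list \<Rightarrow> bool" where
  "oriented_cycle_g Q Ag Ig c \<longleftrightarrow> c \<noteq> [] \<and> set c \<subseteq> Ag \<and>
     (\<forall>i. Suc i < length c \<longrightarrow> qs Q (c ! i) = qt Q (c ! Suc i) \<and> (c ! i, c ! Suc i) \<notin> Ig) \<and>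
     qt Q (hd c) = qs Q (last c)"

definition acyclic_kronecker ::
  "('v,'a,'c) gquiver_scheme \<Rightarrow> 'a set \<Rightarrow> ('a \<times> 'a) set \<Rightarrow> 'a \<Rightarrow> 'a \<Rightarrow> bool" where
  "acyclic_kronecker Q Ag Ig al be \<longleftrightarrow>
     \<not> (\<exists>c. oriented_cycle_g Q Ag Ig c \<and> (al \<in> set c \<or> be \<in> set c))"

section \<open>One-sided twisted complexes over P(Lambda)\<close>

text \<open>An object of P(Lambda)^pre-tr is a list [(v_0, r_0), ..., (v_{m-1}, r_{m-1})]
(standing for the sum of the P_{v_i}[r_i]) together with a matrix D of elements of
Lambda (represented in KQ).\<close>
type_synonym 'v tw_obj = "('v \<times> int) list"
type_synonym ('v,'a,'k) kq_mat = "nat \<Rightarrow> nat \<Rightarrow> ('v,'a,'k) kq"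

definition tw_mor :: "('v,'a,'c) gquiver_scheme \<Rightarrow> 'v tw_obj \<Rightarrow> 'v tw_obj \<Rightarrow> int \<Rightarrow>
    ('v,'a,'k::zero) kq_mat set" where
  "tw_mor Q X Y n = {f.
     (\<forall>k l. k < length Y \<and> l < length X \<longrightarrow>
        f k l \<in> kq_hom Q (fst (X ! l)) (fst (Y ! k)) (n - snd (X ! l) + snd (Y ! k))) \<and>
     (\<forall>k l. \<not> (k < length Y \<and> l < length X) \<longrightarrow> f k l = kq_zero)}"

definition mat_zero :: "('v,'a,'k::zero) kq_mat" where
  "mat_zero = (\<lambda>k l. kq_zero)"

definition mat_smult :: "'k::times \<Rightarrow> ('v,'a,'k) kq_mat \<Rightarrow> ('v,'a,'k) kq_mat" where
  "mat_smult c f = (\<lambda>k l. kq_smult c (f k l))"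

definition tw_comp :: "('v,'a,'c) gquiver_scheme \<Rightarrow> nat \<Rightarrow> ('v,'a,'k::comm_semiring_1) kq_mat \<Rightarrow>
    ('v,'a,'k) kq_mat \<Rightarrow> ('v,'a,'k) kq_mat" where
  "tw_comp Q m g f = (\<lambda>k l p. \<Sum>j<m. kq_mult Q (g k j) (f j l) p)"

text \<open>Differential on End(X, D) in degree n: d f = d_naive f + D f - (-1)^n f D,
where d_naive = 0 since P(Lambda) has zero differential.\<close>
definition tw_d :: "('v,'a,'c) gquiver_scheme \<Rightarrow> 'v tw_obj \<Rightarrow> ('v,'a,'k::comm_ring_1) kq_mat \<Rightarrow>
    int \<Rightarrow> ('v,'a,'k) kq_mat \<Rightarrow> ('v,'a,'k) kq_mat" where
  "tw_d Q X D n f = (\<lambda>k l p. tw_comp Q (length X) D f k l p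
       - (if even n then 1 else -1) * tw_comp Q (length X) f D k l p)"

definition mat_equiv :: "('v,'a,'c) gquiver_scheme \<Rightarrow> ('v,'a,'k::comm_ring_1) kq set \<Rightarrow>
    ('v,'a,'k) kq_mat \<Rightarrow> ('v,'a,'k) kq_mat \<Rightarrow> bool" where
  "mat_equiv Q R f g \<longleftrightarrow> (\<forall>k l. kq_diff (f k l) (g k l) \<in> kq_ideal Q R)"

definition tw_cocycle :: "('v,'a,'c) gquiver_scheme \<Rightarrow> ('v,'a,'k::comm_ring_1) kq set \<Rightarrow>
    'v tw_obj \<Rightarrow> ('v,'a,'k) kq_mat \<Rightarrow> int \<Rightarrow> ('v,'a,'k) kq_mat \<Rightarrow> bool" where
  "tw_cocycle Q R X D n f \<longleftrightarrow> f \<in> tw_mor Q X X n \<and> mat_equiv Q R (tw_d Q X D n f) mat_zero"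

definition tw_cohomologous :: "('v,'a,'c) gquiver_scheme \<Rightarrow> ('v,'a,'k::comm_ring_1) kq set \<Rightarrow>
    'v tw_obj \<Rightarrow> ('v,'a,'k) kq_mat \<Rightarrow> int \<Rightarrow> ('v,'a,'k) kq_mat \<Rightarrow> ('v,'a,'k) kq_mat \<Rightarrow> bool" where
  "tw_cohomologous Q R X D n f f' \<longleftrightarrow>
     (\<exists>g \<in> tw_mor Q X X (n - 1).
        mat_equiv Q R (\<lambda>k l. kq_diff (f k l) (f' k l)) (tw_d Q X D (n - 1) g))"

text \<open>Given a DG algebra presented by its cocycles Z n, the relation E n (same class in
H^n), product and scalar multiplication on representatives, and zero: H^* is
isomorphic as a graded K-algebra to K[x]/(x^2) with |x| = 1, i.e. there are classes
[u] in H^0 and [x] in H^1 such that a + b x |-> a[u] + b[x] is a multiplicative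
bijection of graded vector spaces (written out on the basis 1, x).\<close>
definition graded_iso_dual_numbers ::
  "(int \<Rightarrow> 'm \<Rightarrow> bool) \<Rightarrow> (int \<Rightarrow> 'm \<Rightarrow> 'm \<Rightarrow> bool) \<Rightarrow> ('m \<Rightarrow> 'm \<Rightarrow> 'm) \<Rightarrow>
   ('k::field \<Rightarrow> 'm \<Rightarrow> 'm) \<Rightarrow> 'm \<Rightarrow> bool" where
  "graded_iso_dual_numbers Z E mult smult zero \<longleftrightarrow>
     (\<exists>u x. Z 0 u \<and> Z 1 x \<and>
        \<comment> \<open>multiplicativity on the basis\<close>
        E 0 (mult u u) u \<and> E 1 (mult u x) x \<and> E 1 (mult x u) x \<and> E 2 (mult x x) zero \<and>
        \<comment> \<open>surjectivity\<close>
        (\<forall>f. Z 0 f \<longrightarrow> (\<exists>c. E 0 f (smult c u))) \<and>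
        (\<forall>f. Z 1 f \<longrightarrow> (\<exists>c. E 1 f (smult c x))) \<and>
        (\<forall>n f. n \<noteq> 0 \<and> n \<noteq> 1 \<and> Z n f \<longrightarrow> E n f zero) \<and>
        \<comment> \<open>injectivity\<close>
        (\<forall>c. E 0 (smult c u) zero \<longrightarrow> c = 0) \<and>
        (\<forall>c. E 1 (smult c x) zero \<longrightarrow> c = 0))"

definition H_End_iso_dual_numbers :: "('v,'a,'c) gquiver_scheme \<Rightarrow> ('v,'a,'k::field) kq set \<Rightarrow>
    'v tw_obj \<Rightarrow> ('v,'a,'k) kq_mat \<Rightarrow> bool" where
  "H_End_iso_dual_numbers Q R X D \<longleftrightarrow>
     graded_iso_dual_numbers (tw_cocycle Q R X D) (tw_cohomologous Q R X D)
       (tw_comp Q (length X)) (mat_smult :: 'k \<Rightarrow> _) mat_zero"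

definition kron_obj :: "('v,'a,'c) gquiver_scheme \<Rightarrow> 'a \<Rightarrow> 'v \<Rightarrow> 'v \<Rightarrow> 'v tw_obj" where
  "kron_obj Q al v1 v2 = [(v2, qdeg Q al), (v1, 1)]"

definition kron_diff :: "'a \<Rightarrow> 'a \<Rightarrow> 'v \<Rightarrow> 'k::comm_ring_1 \<Rightarrow> ('v,'a,'k) kq_mat" where
  "kron_diff al be v1 mu = (\<lambda>k l. if k = 0 \<and> l = 1
      then kq_add (path_elem (v1, [al])) (kq_smult mu (path_elem (v1, [be])))
      else kq_zero)"

end

theory Submission
  imports Defs
begin

lemma kq_mult_apply:
  "kq_mult Q f g (w, zs) = (\<Sum>i\<in>{0..length zs}. f (ptgt Q (w, drop i zs), take i zs) * g (w, drop i zs))"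
  by (simp add: kq_mult_def)

lemma kq_mult_Nil: "kq_mult Q f g (w, []) = f (w, []) * g (w, [])"
  by (simp add: kq_mult_def ptgt_def)

lemma kq_mult_single:
  "kq_mult Q f g (w, [z]) = f (qt Q z, []) * g (w, [z]) + f (w, [z]) * g (w, [])"
  by (simp add: kq_mult_def ptgt_def)

lemma kq_mult_zero_left[simp]: "kq_mult Q kq_zero g = kq_zero"
  by (rule ext) (simp add: kq_mult_def kq_zero_def split: prod.split)

lemma kq_mult_zero_right[simp]: "kq_mult Q f kq_zero = kq_zero"
  by (rule ext) (simp add: kq_mult_def kq_zero_def split: prod.split)

lemma kq_mult_add_right: "kq_mult Q f (kq_add g h) = kq_add (kq_mult Q f g) (kq_mult Q f h)"
  by (rule ext) (simp add: kq_mult_def kq_add_def sum.distrib distrib_left split: prod.split)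

lemma kq_mult_add_left: "kq_mult Q (kq_add f g) h = kq_add (kq_mult Q f h) (kq_mult Q g h)"
  by (rule ext) (simp add: kq_mult_def kq_add_def sum.distrib distrib_right split: prod.split)

lemma kq_mult_diff_right:
  fixes f :: "('v,'a,'k::comm_ring_1) kq"
  shows "kq_mult Q f (kq_diff g h) = kq_diff (kq_mult Q f g) (kq_mult Q f h)"
  by (rule ext) (simp add: kq_mult_def kq_diff_def sum_subtractf[symmetric] right_diff_distrib split: prod.split)

lemma kq_mult_diff_left:
  fixes f :: "('v,'a,'k::comm_ring_1) kq"
  shows "kq_mult Q (kq_diff f g) h = kq_diff (kq_mult Q f h) (kq_mult Q g h)"
  by (rule ext) (simp add: kq_mult_def kq_diff_def sum_subtractf[symmetric] left_diff_distrib split: prod.split)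

lemma kq_mult_smult_left: "kq_mult Q (kq_smult c f) h = kq_smult c (kq_mult Q f h)"
  by (rule ext) (simp add: kq_mult_def kq_smult_def sum_distrib_left mult.assoc split: prod.split)

lemma path_elem_mult_pt:
  "kq_mult Q (path_elem (a, xs)) (path_elem (b, ys) :: ('v,'a,'k::comm_semiring_1) kq) (w, zs) =
     (if a = ptgt Q (b, ys) \<and> w = b \<and> zs = xs @ ys then 1 else 0)"
proof -
  let ?t = "\<lambda>i. (path_elem (a, xs) (ptgt Q (w, drop i zs), take i zs) * path_elem (b, ys) (w, drop i zs) :: 'k)"
  have nz: "?t i \<noteq> 0 \<Longrightarrow> i \<in> {0..length zs} \<Longrightarrow> i = length xs \<and> w = b \<and> zs = xs @ ys \<and> a = ptgt Q (b, ys)" for i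
    by (auto simp: path_elem_def split: if_splits)
  show ?thesis
  proof (cases "a = ptgt Q (b, ys) \<and> w = b \<and> zs = xs @ ys")
    case True
    then have "kq_mult Q (path_elem (a, xs)) (path_elem (b, ys)) (w, zs) = sum ?t {length xs}"
      unfolding kq_mult_apply
      by (intro sum.mono_neutral_right) (use nz in auto)
    then show ?thesis using True by (simp add: path_elem_def)
  next
    case False
    then have "kq_mult Q (path_elem (a, xs)) (path_elem (b, ys)) (w, zs) = (0::'k)"
      unfolding kq_mult_apply by (intro sum.neutral ballI) (metis nz False)
    then show ?thesis using False by auto
  qed
qed

lemma path_elem_mult:
  "kq_mult Q (path_elem (a, xs)) (path_elem (b, ys) :: ('v,'a,'k::comm_semiring_1) kq) =
     (if a = ptgt Q (b, ys) then path_elem (b, xs @ ys) else kq_zero)"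
proof (rule ext)
  fix p :: "('v,'a) path"
  obtain w zs where p: "p = (w, zs)" by (cases p)
  show "kq_mult Q (path_elem (a, xs)) (path_elem (b, ys) :: ('v,'a,'k::comm_semiring_1) kq) p =
     (if a = ptgt Q (b, ys) then path_elem (b, xs @ ys) else kq_zero) p"
    unfolding p path_elem_mult_pt by (simp add: path_elem_def kq_zero_def)
qed


fun adj :: "('a \<Rightarrow> 'a \<Rightarrow> bool) \<Rightarrow> 'a list \<Rightarrow> bool" where
  "adj P (x # y # zs) = (P x y \<and> adj P (y # zs))"
| "adj P _ = True"

lemma adj_iff: "adj P xs \<longleftrightarrow> (\<forall>i. Suc i < length xs \<longrightarrow> P (xs ! i) (xs ! Suc i))"
proof (induction P xs rule: adj.induct)
  case (1 P x y zs)
  show ?case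
  proof
    assume "adj P (x # y # zs)"
    then show "\<forall>i. Suc i < length (x # y # zs) \<longrightarrow> P ((x # y # zs) ! i) ((x # y # zs) ! Suc i)"
      using 1 by (auto simp: nth_Cons split: nat.splits)
  next
    assume a: "\<forall>i. Suc i < length (x # y # zs) \<longrightarrow> P ((x # y # zs) ! i) ((x # y # zs) ! Suc i)"
    have "P x y" using a[rule_format, of 0] by simp
    moreover have "\<forall>i. Suc i < length (y # zs) \<longrightarrow> P ((y # zs) ! i) ((y # zs) ! Suc i)"
      using a by (metis Suc_less_eq length_Cons nth_Cons_Suc)
    ultimately show "adj P (x # y # zs)" using 1 by simp
  qed
qed auto

lemma adj_append:
  "adj P (xs @ ys) \<longleftrightarrow> adj P xs \<and> adj P ys \<and> (xs \<noteq> [] \<longrightarrow> ys \<noteq> [] \<longrightarrow> P (last xs) (hd ys))"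
proof (induction xs)
  case Nil
  then show ?case by simp
next
  case (Cons x xs)
  then show ?case by (cases xs; cases ys) auto
qed

lemma adj_conj: "adj (\<lambda>x y. P x y \<and> R x y) xs \<longleftrightarrow> adj P xs \<and> adj R xs"
  by (induction P xs rule: adj.induct) auto

lemma not_adj: "\<not> adj P xs \<Longrightarrow> \<exists>B1 x y B2. xs = B1 @ x # y # B2 \<and> \<not> P x y"
proof (induction P xs rule: adj.induct)
  case (1 P x y zs)
  show ?case
  proof (cases "P x y")
    case True
    then have "\<not> adj P (y # zs)" using 1 by simp
    then obtain B1 a b B2 where "y # zs = B1 @ a # b # B2" "\<not> P a b" using 1 by blast
    then show ?thesis by (metis append_Cons)
  next
    case False
    then show ?thesis by (metis append_Nil)
  qed
qed auto

lemma valid_path_iff: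
  "valid_path Q (v, xs) \<longleftrightarrow> v \<in> qV Q \<and> set xs \<subseteq> qA Q \<and> (xs \<noteq> [] \<longrightarrow> qs Q (last xs) = v)
     \<and> adj (\<lambda>x y. qs Q x = qt Q y) xs"
  by (simp add: valid_path_def adj_iff)

lemma in_KQ_path_elem: "valid_path Q p \<Longrightarrow> in_KQ Q (path_elem p)"
  by (simp add: in_KQ_def path_elem_def)

lemma in_KQ_smult: "in_KQ Q x \<Longrightarrow> in_KQ Q (kq_smult (c::'k::comm_ring_1) x)"
proof -
  assume a: "in_KQ Q x"
  have "{p. c * x p \<noteq> 0} \<subseteq> {p. x p \<noteq> 0}" by auto
  then show ?thesis using a unfolding in_KQ_def kq_smult_def
    by (metis (mono_tags, lifting) finite_subset mult_zero_right)
qed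

lemma ideal_smult:
  assumes "f \<in> kq_ideal Q R"
  shows "kq_smult c f \<in> kq_ideal Q R"
  using assms
proof (induction rule: kq_ideal.induct)
  case zero
  have "kq_smult c kq_zero = (kq_zero :: ('a,'b,'c) kq)" by (rule ext) (simp add: kq_smult_def kq_zero_def)
  then show ?case by (simp add: kq_ideal.zero)
next
  case (gen r x y)
  have "kq_smult c (kq_mult Q (kq_mult Q x r) y) = kq_mult Q (kq_mult Q (kq_smult c x) r) y"
    by (simp add: kq_mult_smult_left)
  then show ?case using gen by (simp add: kq_ideal.gen in_KQ_smult)
next
  case (add f g)
  have "kq_smult c (kq_add f g) = kq_add (kq_smult c f) (kq_smult c g)"
    by (rule ext) (simp add: kq_smult_def kq_add_def distrib_left)
  then show ?case using add by (simp add: kq_ideal.add)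
qed

lemma ideal_zeroI: "(\<forall>p. f p = 0) \<Longrightarrow> f \<in> kq_ideal Q R"
proof -
  assume "\<forall>p. f p = 0"
  then have "f = kq_zero" by (auto simp: kq_zero_def)
  then show ?thesis by (simp add: kq_ideal.zero)
qed

lemma ideal_diff:
  assumes "f \<in> kq_ideal Q R" "g \<in> kq_ideal Q R"
  shows "kq_diff f g \<in> kq_ideal Q R"
proof -
  have "kq_diff f g = kq_add f (kq_smult (-1) g)"
    by (rule ext) (simp add: kq_diff_def kq_add_def kq_smult_def)
  then show ?thesis using assms by (simp add: kq_ideal.add ideal_smult)
qed

lemma ideal_cong: "f \<in> kq_ideal Q R \<Longrightarrow> (\<And>p. g p = f p) \<Longrightarrow> g \<in> kq_ideal Q R"
proof -
  assume "f \<in> kq_ideal Q R" "\<And>p. g p = f p"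
  then show ?thesis by (metis ext)
qed

lemma restrict_in_ideal_aux:
  assumes "finite S"
  shows "(\<forall>p\<in>S. f p \<noteq> 0 \<longrightarrow> P p \<longrightarrow> path_elem p \<in> kq_ideal Q R) \<Longrightarrow>
    (\<lambda>q. if P q \<and> q \<in> S then f q else 0) \<in> kq_ideal Q R"
  using assms
proof (induction S rule: finite_induct)
  case empty
  then show ?case by (simp add: ideal_zeroI)
next
  case (insert x S)
  then have old: "(\<lambda>q. if P q \<and> q \<in> S then f q else 0) \<in> kq_ideal Q R" by simp
  show ?case
  proof (cases "P x \<and> f x \<noteq> 0")
    case True
    then have pe: "path_elem x \<in> kq_ideal Q R" using insert by simp
    have "kq_add (\<lambda>q. if P q \<and> q \<in> S then f q else 0) (kq_smult (f x) (path_elem x)) \<in> kq_ideal Q R"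
      by (rule kq_ideal.add[OF old ideal_smult[OF pe]])
    then show ?thesis
      by (rule ideal_cong) (use insert True in \<open>auto simp: kq_add_def kq_smult_def path_elem_def\<close>)
  next
    case False
    show ?thesis
      by (rule ideal_cong[OF old]) (use insert False in auto)
  qed
qed

lemma restrict_in_ideal:
  assumes "finite {p. f p \<noteq> 0}" "\<And>p. f p \<noteq> 0 \<Longrightarrow> P p \<Longrightarrow> path_elem p \<in> kq_ideal Q R"
  shows "(\<lambda>q. if P q then f q else 0) \<in> kq_ideal Q R"
proof -
  have "(\<lambda>q. if P q \<and> q \<in> {p. f p \<noteq> 0} then f q else 0) \<in> kq_ideal Q R"
    by (rule restrict_in_ideal_aux[OF assms(1)]) (use assms(2) in blast)
  moreover have "(\<lambda>q. if P q \<and> q \<in> {p. f p \<noteq> 0} then f q else 0) = (\<lambda>q. if P q then f q else 0)"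
    by auto
  ultimately show ?thesis by simp
qed


lemma vp_prefix:
  assumes "valid_path Q (s, X @ z # Y)" "\<forall>x\<in>qA Q. qt Q x \<in> qV Q"
  shows "valid_path Q (qt Q z, X)"
proof -
  have "z \<in> qA Q" using assms(1) by (simp add: valid_path_iff)
  then show ?thesis using assms
    by (auto simp: valid_path_iff adj_append)
qed

lemma vp_suffix:
  assumes "valid_path Q (s, X @ Y)"
  shows "valid_path Q (s, Y)"
  using assms by (auto simp: valid_path_iff adj_append)

lemma vp_ptgt:
  assumes "valid_path Q (s, X @ z # Y)"
  shows "ptgt Q (s, Y) = qs Q z"
  using assms by (cases Y) (auto simp: valid_path_iff adj_append ptgt_def)

lemma vp_remove_loop:
  assumes "valid_path Q (s, X @ r # g # Y)" "qs Q g = qt Q g"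
  shows "valid_path Q (s, X @ r # Y)"
proof -
  have e1: "X @ r # g # Y = (X @ [r]) @ (g # Y)" by simp
  have e2: "X @ r # Y = (X @ [r]) @ Y" by simp
  show ?thesis using assms unfolding valid_path_iff e1 e2 adj_append
    by (cases Y) auto
qed

locale kron =
  fixes Q :: "('v,'a) gquiver" and Ag :: "'a set" and Lv :: "'v set"
    and gam alp alm bep bem :: "'v \<Rightarrow> 'a" and Ig :: "('a \<times> 'a) set"
    and al be :: 'a and v1 v2 :: 'v
  assumes G: "graded_pinched_gentle Q Ag Lv gam alp alm bep bem Ig"
    and K: "graded_kronecker Q Ag Lv al be v1 v2"
    and AC: "acyclic_kronecker Q Ag Ig al be"
begin

abbreviation RR where "RR \<equiv> pg_rels Q Lv gam alp alm bep bem Ig"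

lemma finA: "finite (qA Q)" using G unfolding graded_pinched_gentle_def by blast
lemma arrV: "x \<in> qA Q \<Longrightarrow> qs Q x \<in> qV Q \<and> qt Q x \<in> qV Q"
  using G by (simp add: graded_pinched_gentle_def)
lemma qA_eq: "qA Q = Ag \<union> gam ` Lv" using G by (simp add: graded_pinched_gentle_def)
lemma gam_st: "v \<in> Lv \<Longrightarrow> qs Q (gam v) = v \<and> qt Q (gam v) = v"
  using G by (simp add: graded_pinched_gentle_def)
lemma pinch: "v \<in> Lv \<Longrightarrow> alp v \<in> Ag \<and> alm v \<in> Ag \<and> bep v \<in> Ag \<and> bem v \<in> Ag \<and>
        qs Q (alp v) = v \<and> qs Q (bep v) = v \<and> qt Q (alm v) = v \<and> qt Q (bem v) = v \<and>
        alp v \<noteq> bep v \<and> alm v \<noteq> bem v \<and>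
        (bep v, alm v) \<in> Ig \<and> (alp v, bem v) \<in> Ig"
  using G by (simp add: graded_pinched_gentle_def)
lemma Kf: "al \<in> Ag" "be \<in> Ag" "al \<noteq> be" "qs Q al = v1" "qs Q be = v1" "qt Q al = v2" "qt Q be = v2"
  "qdeg Q al = qdeg Q be" "v1 \<notin> Lv" "v2 \<notin> Lv" "v1 \<noteq> v2"
  using K by (auto simp: graded_kronecker_def)
lemma AgA: "Ag \<subseteq> qA Q" using qA_eq by auto
lemma finAg: "finite Ag" using finA AgA finite_subset by blast

lemma v1V: "v1 \<in> qV Q" using arrV[of al] Kf AgA by auto
lemma v2V: "v2 \<in> qV Q" using arrV[of al] Kf AgA by auto

lemma card2:
  assumes "card {x\<in>Ag. P x} \<le> 2" "a \<in> Ag" "b \<in> Ag" "P a" "P b" "a \<noteq> b" "z \<in> Ag" "P z"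
  shows "z = a \<or> z = b"
proof (rule ccontr)
  assume "\<not> (z = a \<or> z = b)"
  then have "card {a, b, z} = 3" using assms by auto
  moreover have "{a, b, z} \<subseteq> {x\<in>Ag. P x}" using assms by auto
  ultimately have "3 \<le> card {x\<in>Ag. P x}"
    by (metis (no_types, lifting) card_mono finAg finite_subset mem_Collect_eq subsetI)
  then show False using assms by simp
qed

lemma not_gam_v: "v \<notin> Lv \<Longrightarrow> z \<in> qA Q \<Longrightarrow> (qs Q z = v \<or> qt Q z = v) \<Longrightarrow> z \<in> Ag"
  using qA_eq gam_st by auto

lemma out1: "z \<in> qA Q \<Longrightarrow> qs Q z = v1 \<Longrightarrow> z = al \<or> z = be"
proof -
  assume z: "z \<in> qA Q" "qs Q z = v1"
  then have "z \<in> Ag" using not_gam_v Kf by blast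
  moreover have "card {x\<in>Ag. qs Q x = v1} \<le> 2" using G v1V by (simp add: graded_pinched_gentle_def)
  ultimately show ?thesis using card2[of "\<lambda>x. qs Q x = v1"] Kf z by blast
qed

lemma in2: "z \<in> qA Q \<Longrightarrow> qt Q z = v2 \<Longrightarrow> z = al \<or> z = be"
proof -
  assume z: "z \<in> qA Q" "qt Q z = v2"
  then have "z \<in> Ag" using not_gam_v Kf by blast
  moreover have "card {x\<in>Ag. qt Q x = v2} \<le> 2" using G v2V by (simp add: graded_pinched_gentle_def)
  ultimately show ?thesis using card2[of "\<lambda>x. qt Q x = v2"] Kf z by blast
qed

lemma outv: "v \<in> Lv \<Longrightarrow> z \<in> Ag \<Longrightarrow> qs Q z = v \<Longrightarrow> z = alp v \<or> z = bep v"
proof -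
  assume z: "v \<in> Lv" "z \<in> Ag" "qs Q z = v"
  have "v \<in> qV Q" using G z(1) by (simp add: graded_pinched_gentle_def subset_iff)
  then have "card {x\<in>Ag. qs Q x = v} \<le> 2" using G by (simp add: graded_pinched_gentle_def)
  then show ?thesis using card2[of "\<lambda>x. qs Q x = v"] pinch[OF z(1)] z by blast
qed

lemma relpair: "y \<in> Ag \<Longrightarrow> qt Q y = v1 \<Longrightarrow> (al, y) \<notin> Ig \<or> (be, y) \<notin> Ig"
proof (rule ccontr)
  assume y: "y \<in> Ag" "qt Q y = v1" "\<not> ((al, y) \<notin> Ig \<or> (be, y) \<notin> Ig)"
  have c1: "card {x\<in>Ag. qs Q x = qt Q y \<and> (x, y) \<in> Ig} \<le> 1"
    using G y(1) by (simp add: graded_pinched_gentle_def)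
  have "{al, be} \<subseteq> {x\<in>Ag. qs Q x = qt Q y \<and> (x, y) \<in> Ig}" using y Kf by auto
  then have "card {al, be} \<le> card {x\<in>Ag. qs Q x = qt Q y \<and> (x, y) \<in> Ig}"
    by (rule card_mono[rotated]) (use finAg in auto)
  then show False using c1 Kf by simp
qed


lemma arrqt: "\<forall>x\<in>qA Q. qt Q x \<in> qV Q" using arrV by blast

lemma path21:
  "length B = n \<Longrightarrow> valid_path Q (s, A @ B @ C) \<Longrightarrow> B \<noteq> [] \<Longrightarrow> qt Q (hd B) = v1 \<Longrightarrow>
   qs Q (last B) = v2 \<Longrightarrow> (path_elem (s, A @ B @ C) :: ('v,'a,'k::comm_ring_1) kq) \<in> kq_ideal Q RR"
proof (induction n arbitrary: B rule: less_induct)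
  case (less n B)
  note vp = less.prems(2)
  have setB: "set B \<subseteq> qA Q" using vp by (simp add: valid_path_iff)
  have chB: "adj (\<lambda>x y. qs Q x = qt Q y) B" using vp by (simp add: valid_path_iff adj_append)
  show ?case
  proof (cases "\<exists>z\<in>set B. z \<in> gam ` Lv")
    case True
    obtain B1 g B2 where B: "B = B1 @ g # B2" "g \<in> gam ` Lv" "\<forall>y\<in>set B1. y \<notin> gam ` Lv"
      using split_list_first_prop[OF True] by blast
    obtain v where v: "v \<in> Lv" "g = gam v" using B(2) by blast
    have B1ne: "B1 \<noteq> []"
    proof
      assume "B1 = []"
      then have "hd B = g" using B by simp
      then show False using less.prems(4) v gam_st Kf by auto
    qed
    obtain B1' r where B1: "B1 = B1' @ [r]" using B1ne by (metis rev_exhaust)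
    have rA: "r \<in> qA Q" using setB B B1 by auto
    have rAg: "r \<in> Ag" using rA B(3) B1 qA_eq by auto
    have "adj (\<lambda>x y. qs Q x = qt Q y) (B1' @ r # g # B2)" using chB B B1 by simp
    then have "qs Q r = qt Q g" by (simp add: adj_append)
    then have rv: "qs Q r = v" using gam_st v by simp
    have r2: "r = alp v \<or> r = bep v" using outv[OF v(1) rAg rv] .
    have B2ne: "B2 \<noteq> []"
    proof
      assume "B2 = []"
      then have "last B = g" using B by simp
      then show False using less.prems(5) v gam_st Kf by auto
    qed
    define X where "X = A @ B1'"
    define Y where "Y = B2 @ C"
    have whole: "A @ B @ C = X @ r # g # Y" using B B1 by (simp add: X_def Y_def)
    have vp': "valid_path Q (s, X @ r # Y)"
      using vp_remove_loop[of Q s X r g Y] vp whole gam_st v by simp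
    have whole': "X @ r # Y = A @ (B1' @ r # B2) @ C" by (simp add: X_def Y_def)
    have IH: "(path_elem (s, X @ r # Y) :: ('v,'a,'k) kq) \<in> kq_ideal Q RR"
      unfolding whole'
      by (rule less.IH[of "length (B1' @ r # B2)"])
         (use B B1 less.prems B2ne whole' vp' in \<open>auto simp: hd_append\<close>)
    have vx: "valid_path Q (qt Q r, X)" using vp_prefix[of Q s X r "g # Y"] vp whole arrqt by simp
    have vy: "valid_path Q (s, Y)" using vp_suffix[of Q s "X @ [r, g]" Y] vp whole by simp
    have pt: "ptgt Q (s, Y) = v" using vp_ptgt[of Q s "X @ [r]" g Y] vp whole gam_st v by simp
    have ptr: "ptgt Q (v, [r, g]) = qt Q r" "ptgt Q (v, [r]) = qt Q r" by (simp_all add: ptgt_def)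
    have m1: "kq_mult Q (kq_mult Q (path_elem (qt Q r, X)) (path_elem (v, [r, g]))) (path_elem (s, Y))
        = (path_elem (s, X @ r # g # Y) :: ('v,'a,'k) kq)"
      using pt ptr by (simp add: path_elem_mult)
    have m2: "kq_mult Q (kq_mult Q (path_elem (qt Q r, X)) (path_elem (v, [r]))) (path_elem (s, Y))
        = (path_elem (s, X @ r # Y) :: ('v,'a,'k) kq)"
      using pt ptr by (simp add: path_elem_mult)
    show ?thesis
      using r2
    proof
      assume ra: "r = alp v"
      let ?r = "kq_diff (path_elem (v, [alp v, gam v])) (path_elem (v, [alp v])) :: ('v,'a,'k) kq"
      have "?r \<in> RR" using v(1) unfolding pg_rels_def by blast
      then have "kq_mult Q (kq_mult Q (path_elem (qt Q r, X)) ?r) (path_elem (s, Y)) \<in> kq_ideal Q RR"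
        by (rule kq_ideal.gen) (use vx vy in \<open>simp_all add: in_KQ_path_elem\<close>)
      then have "kq_diff (path_elem (s, X @ r # g # Y)) (path_elem (s, X @ r # Y) :: ('v,'a,'k) kq) \<in> kq_ideal Q RR"
        using m1 m2 ra v by (simp add: kq_mult_diff_right kq_mult_diff_left)
      then have "kq_add (kq_diff (path_elem (s, X @ r # g # Y)) (path_elem (s, X @ r # Y) :: ('v,'a,'k) kq))
          (path_elem (s, X @ r # Y)) \<in> kq_ideal Q RR"
        using IH by (rule kq_ideal.add)
      then show ?thesis unfolding whole
        by (rule ideal_cong) (simp add: kq_add_def kq_diff_def)
    next
      assume ra: "r = bep v"
      let ?r = "kq_add (path_elem (v, [bep v, gam v])) (path_elem (v, [bep v])) :: ('v,'a,'k) kq"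
      have "?r \<in> RR" using v(1) unfolding pg_rels_def by blast
      then have "kq_mult Q (kq_mult Q (path_elem (qt Q r, X)) ?r) (path_elem (s, Y)) \<in> kq_ideal Q RR"
        by (rule kq_ideal.gen) (use vx vy in \<open>simp_all add: in_KQ_path_elem\<close>)
      then have "kq_add (path_elem (s, X @ r # g # Y)) (path_elem (s, X @ r # Y) :: ('v,'a,'k) kq) \<in> kq_ideal Q RR"
        using m1 m2 ra v by (simp add: kq_mult_add_right kq_mult_add_left)
      then have "kq_diff (kq_add (path_elem (s, X @ r # g # Y)) (path_elem (s, X @ r # Y) :: ('v,'a,'k) kq))
          (path_elem (s, X @ r # Y)) \<in> kq_ideal Q RR"
        using IH by (rule ideal_diff)
      then show ?thesis unfolding whole
        by (rule ideal_cong) (simp add: kq_add_def kq_diff_def)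
    qed
  next
    case False
    then have BAg: "set B \<subseteq> Ag" using setB qA_eq by auto
    show ?thesis
    proof (cases "adj (\<lambda>x y. (x, y) \<notin> Ig) B")
      case False
      then obtain B1 x y B2 where B: "B = B1 @ x # y # B2" "(x, y) \<in> Ig" using not_adj by fastforce
      define X where "X = A @ B1"
      define Y where "Y = B2 @ C"
      have whole: "A @ B @ C = X @ x # y # Y" using B by (simp add: X_def Y_def)
      have vx: "valid_path Q (qt Q x, X)" using vp_prefix[of Q s X x "y # Y"] vp whole arrqt by simp
      have vy: "valid_path Q (s, Y)" using vp_suffix[of Q s "X @ [x, y]" Y] vp whole by simp
      have pt: "ptgt Q (s, Y) = qs Q y" using vp_ptgt[of Q s "X @ [x]" y Y] vp whole by simp
      have "(path_elem (qs Q y, [x, y]) :: ('v,'a,'k) kq) \<in> RR" using B(2) unfolding pg_rels_def by blast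
      then have "kq_mult Q (kq_mult Q (path_elem (qt Q x, X)) (path_elem (qs Q y, [x, y]))) (path_elem (s, Y) :: ('v,'a,'k) kq)
          \<in> kq_ideal Q RR"
        by (rule kq_ideal.gen) (use vx vy in \<open>simp_all add: in_KQ_path_elem\<close>)
      then show ?thesis unfolding whole using pt by (simp add: path_elem_mult ptgt_def)
    next
      case True
      obtain b bs where Bc: "B = b # bs" using less.prems(3) by (cases B) auto
      have bAg: "b \<in> Ag" using BAg Bc by simp
      have bt: "qt Q b = v1" using less.prems(4) Bc by simp
      obtain z where z: "z = al \<or> z = be" "(z, b) \<notin> Ig"
        using relpair[OF bAg bt] by blast
      have zs: "qs Q z = v1" "qt Q z = v2" "z \<in> Ag" using z Kf by auto
      have "oriented_cycle_g Q Ag Ig (z # B)"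
        unfolding oriented_cycle_g_def
      proof (intro conjI)
        show "set (z # B) \<subseteq> Ag" using BAg zs by simp
        have "adj (\<lambda>x y. qs Q x = qt Q y \<and> (x, y) \<notin> Ig) (z # B)"
          unfolding adj_conj using chB True Bc zs bt z by simp
        then show "\<forall>i. Suc i < length (z # B) \<longrightarrow> qs Q ((z # B) ! i) = qt Q ((z # B) ! Suc i) \<and>
            ((z # B) ! i, (z # B) ! Suc i) \<notin> Ig"
          unfolding adj_iff by blast
        show "qt Q (hd (z # B)) = qs Q (last (z # B))" using zs less.prems(5) Bc by simp
      qed simp
      then show ?thesis using AC z(1) unfolding acyclic_kronecker_def by auto
    qed
  qed
qed


lemma ptgt_cons: "ptgt Q (w, z # zs) = qt Q z" by (simp add: ptgt_def)
lemma ptgt_nil: "ptgt Q (w, []) = w" by (simp add: ptgt_def)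

lemma pe_21:
  assumes "valid_path Q (v2, zs)" "ptgt Q (v2, zs) = v1"
  shows "(path_elem (v2, zs) :: ('v,'a,'k::comm_ring_1) kq) \<in> kq_ideal Q RR"
proof -
  have ne: "zs \<noteq> []" using assms Kf by (auto simp: ptgt_def)
  have "(path_elem (v2, [] @ zs @ []) :: ('v,'a,'k::comm_ring_1) kq) \<in> kq_ideal Q RR"
    by (rule path21[OF refl]) (use assms ne in \<open>auto simp: ptgt_def valid_path_iff\<close>)
  then show ?thesis by simp
qed

lemma pe_11:
  assumes "valid_path Q (v1, zs)" "ptgt Q (v1, zs) = v1" "zs \<noteq> []"
  shows "(path_elem (v1, zs) :: ('v,'a,'k::comm_ring_1) kq) \<in> kq_ideal Q RR"
proof -
  obtain B z where zs: "zs = B @ [z]" using assms(3) by (metis rev_exhaust)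
  have zA: "z \<in> qA Q" "qs Q z = v1" using assms(1) zs by (auto simp: valid_path_iff)
  then have zt: "qt Q z = v2" using out1 Kf by blast
  have Bne: "B \<noteq> []" using assms(2) zs zt Kf by (auto simp: ptgt_def)
  have ch: "adj (\<lambda>x y. qs Q x = qt Q y) (B @ [z])" using assms(1) zs by (simp add: valid_path_iff)
  have "(path_elem (v1, [] @ B @ [z]) :: ('v,'a,'k::comm_ring_1) kq) \<in> kq_ideal Q RR"
    by (rule path21[OF refl]) (use assms zs Bne ch zt in \<open>auto simp: ptgt_def adj_append\<close>)
  then show ?thesis using zs by simp
qed

lemma pe_22:
  assumes "valid_path Q (v2, zs)" "ptgt Q (v2, zs) = v2" "zs \<noteq> []"
  shows "(path_elem (v2, zs) :: ('v,'a,'k::comm_ring_1) kq) \<in> kq_ideal Q RR"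
proof -
  obtain z B where zs: "zs = z # B" using assms(3) by (cases zs) auto
  have zA: "z \<in> qA Q" "qt Q z = v2" using assms zs by (auto simp: valid_path_iff ptgt_def)
  then have zt: "qs Q z = v1" using in2 Kf by blast
  have Bne: "B \<noteq> []" using assms(1) zs zt Kf by (auto simp: valid_path_iff)
  have ch: "adj (\<lambda>x y. qs Q x = qt Q y) ([z] @ B)" using assms(1) zs by (simp add: valid_path_iff)
  have hB: "qt Q (hd B) = v1" using ch Bne zt by (cases B) auto
  have "(path_elem (v2, [z] @ B @ []) :: ('v,'a,'k::comm_ring_1) kq) \<in> kq_ideal Q RR"
    by (rule path21[OF refl]) (use assms zs Bne hB in \<open>auto simp: valid_path_iff\<close>)
  then show ?thesis using zs by simp
qed

lemma pe_12:
  assumes "valid_path Q (v1, zs)" "ptgt Q (v1, zs) = v2" "zs \<noteq> [al]" "zs \<noteq> [be]"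
  shows "(path_elem (v1, zs) :: ('v,'a,'k::comm_ring_1) kq) \<in> kq_ideal Q RR"
proof -
  have ne: "zs \<noteq> []" using assms Kf by (auto simp: ptgt_def)
  obtain z zs' where zs: "zs = z # zs'" using ne by (cases zs) auto
  have zA: "z \<in> qA Q" "qt Q z = v2" using assms zs by (auto simp: valid_path_iff ptgt_def)
  then have zab: "z = al \<or> z = be" using in2 by blast
  then have zt: "qs Q z = v1" using Kf by auto
  have ne': "zs' \<noteq> []" using zab assms zs by auto
  obtain B y where zs': "zs' = B @ [y]" using ne' by (metis rev_exhaust)
  have yA: "y \<in> qA Q" "qs Q y = v1" using assms(1) zs zs' by (auto simp: valid_path_iff)
  then have yt: "qt Q y = v2" using out1 Kf by blast
  have ch: "adj (\<lambda>x y. qs Q x = qt Q y) ([z] @ B @ [y])" using assms(1) zs zs' by (simp add: valid_path_iff)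
  have Bne: "B \<noteq> []" using ch zt yt Kf by auto
  have ch1: "adj (\<lambda>x y. qs Q x = qt Q y) (z # B)" and ch2: "qs Q (last B) = qt Q y"
  proof -
    have e: "[z] @ B @ [y] = (z # B) @ [y]" by simp
    show "adj (\<lambda>x y. qs Q x = qt Q y) (z # B)" "qs Q (last B) = qt Q y"
      using ch Bne unfolding e adj_append by auto
  qed
  have hB: "qt Q (hd B) = v1" using ch1 Bne zt by (cases B) auto
  have "(path_elem (v1, [z] @ B @ [y]) :: ('v,'a,'k::comm_ring_1) kq) \<in> kq_ideal Q RR"
    by (rule path21[OF refl]) (use assms zs zs' Bne hB ch2 yt in auto)
  then show ?thesis using zs zs' by simp
qed

lemma hom_supp:
  assumes "f \<in> kq_hom Q i j n" "f p \<noteq> 0"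
  shows "valid_path Q p \<and> psrc p = i \<and> ptgt Q p = j \<and> pdeg Q p = n"
  using assms unfolding kq_hom_def in_KQ_def by blast

lemma hom_fin: "f \<in> kq_hom Q i j n \<Longrightarrow> finite {p. f p \<noteq> 0}"
  by (auto simp: kq_hom_def in_KQ_def)

lemma hom_deg0: "f \<in> kq_hom Q i j n \<Longrightarrow> n \<noteq> 0 \<Longrightarrow> f (w, []) = 0"
  using hom_supp[of f i j n "(w, [])"] by (auto simp: pdeg_def)

lemma hom_deg1: "f \<in> kq_hom Q i j n \<Longrightarrow> n \<noteq> qdeg Q z \<Longrightarrow> f (w, [z]) = 0"
  using hom_supp[of f i j n "(w, [z])"] by (auto simp: pdeg_def)

lemma H21:
  assumes "(f :: ('v,'a,'k::comm_ring_1) kq) \<in> kq_hom Q v2 v1 n"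
  shows "f \<in> kq_ideal Q RR"
proof -
  have "(\<lambda>q. if True then f q else 0) \<in> kq_ideal Q RR"
  proof (rule restrict_in_ideal[OF hom_fin[OF assms]])
    fix p assume "f p \<noteq> 0"
    moreover obtain w zs where p: "p = (w, zs)" by (cases p)
    ultimately show "path_elem p \<in> kq_ideal Q RR" using hom_supp[OF assms, of p] pe_21[of zs]
      by (auto simp: psrc_def)
  qed
  then show ?thesis by simp
qed

lemma H11:
  assumes "(f :: ('v,'a,'k::comm_ring_1) kq) \<in> kq_hom Q v1 v1 n"
  shows "kq_diff f (kq_smult (f (v1, [])) (path_elem (v1, []))) \<in> kq_ideal Q RR"
proof -
  have "(\<lambda>q. if q \<noteq> (v1, []) then f q else 0) \<in> kq_ideal Q RR"
  proof (rule restrict_in_ideal[OF hom_fin[OF assms]])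
    fix p assume "f p \<noteq> 0" "p \<noteq> (v1, [])"
    moreover obtain w zs where p: "p = (w, zs)" by (cases p)
    ultimately show "path_elem p \<in> kq_ideal Q RR" using hom_supp[OF assms, of p] pe_11[of zs]
      by (auto simp: psrc_def)
  qed
  then show ?thesis by (rule ideal_cong) (auto simp: kq_diff_def kq_smult_def path_elem_def)
qed

lemma H22:
  assumes "(f :: ('v,'a,'k::comm_ring_1) kq) \<in> kq_hom Q v2 v2 n"
  shows "kq_diff f (kq_smult (f (v2, [])) (path_elem (v2, []))) \<in> kq_ideal Q RR"
proof -
  have "(\<lambda>q. if q \<noteq> (v2, []) then f q else 0) \<in> kq_ideal Q RR"
  proof (rule restrict_in_ideal[OF hom_fin[OF assms]])
    fix p assume "f p \<noteq> 0" "p \<noteq> (v2, [])"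
    moreover obtain w zs where p: "p = (w, zs)" by (cases p)
    ultimately show "path_elem p \<in> kq_ideal Q RR" using hom_supp[OF assms, of p] pe_22[of zs]
      by (auto simp: psrc_def)
  qed
  then show ?thesis by (rule ideal_cong) (auto simp: kq_diff_def kq_smult_def path_elem_def)
qed

lemma H12:
  assumes "(f :: ('v,'a,'k::comm_ring_1) kq) \<in> kq_hom Q v1 v2 n"
  shows "kq_diff f (kq_add (kq_smult (f (v1, [al])) (path_elem (v1, [al])))
                           (kq_smult (f (v1, [be])) (path_elem (v1, [be])))) \<in> kq_ideal Q RR"
proof -
  have "(\<lambda>q. if q \<noteq> (v1, [al]) \<and> q \<noteq> (v1, [be]) then f q else 0) \<in> kq_ideal Q RR"
  proof (rule restrict_in_ideal[OF hom_fin[OF assms]])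
    fix p assume "f p \<noteq> 0" "p \<noteq> (v1, [al]) \<and> p \<noteq> (v1, [be])"
    moreover obtain w zs where p: "p = (w, zs)" by (cases p)
    ultimately show "path_elem p \<in> kq_ideal Q RR" using hom_supp[OF assms, of p] pe_12[of zs]
      by (auto simp: psrc_def)
  qed
  then show ?thesis by (rule ideal_cong) (use Kf in \<open>auto simp: kq_diff_def kq_smult_def kq_add_def path_elem_def\<close>)
qed

lemma rel_low:
  assumes "r \<in> RR" "length zs \<le> 1" "\<forall>z\<in>set zs. qs Q z \<notin> Lv \<and> qt Q z \<notin> Lv"
  shows "(r :: ('v,'a,'k::comm_ring_1) kq) (w, zs) = 0"
proof -
  have "zs = [] \<or> (\<exists>z. zs = [z])" using assms(2) by (cases zs) auto
  then show ?thesis using assms(1,3) pinch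
    by (auto simp: pg_rels_def path_elem_def kq_add_def kq_diff_def)
qed

lemma ideal_low:
  assumes "(f :: ('v,'a,'k::comm_ring_1) kq) \<in> kq_ideal Q RR" "length zs \<le> 1"
    "\<forall>z\<in>set zs. qs Q z \<notin> Lv \<and> qt Q z \<notin> Lv"
  shows "f (w, zs) = 0"
  using assms
proof (induction arbitrary: w zs rule: kq_ideal.induct)
  case zero
  then show ?case by (simp add: kq_zero_def)
next
  case (gen r x y)
  have "zs = [] \<or> (\<exists>z. zs = [z])" using gen.prems(1) by (cases zs) auto
  then show ?case
  proof
    assume "zs = []"
    then show ?thesis using rel_low[OF gen.hyps(1), of "[]"] by (simp add: kq_mult_Nil)
  next
    assume "\<exists>z. zs = [z]"
    then obtain z where z: "zs = [z]" by blast
    have "r (qt Q z, []) = 0" "r (w, []) = 0" using rel_low[OF gen.hyps(1), of "[]"] by auto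
    moreover have "r (w, [z]) = 0" using rel_low[OF gen.hyps(1), of "[z]"] gen.prems z by auto
    ultimately show ?thesis using z by (simp add: kq_mult_single kq_mult_Nil)
  qed
next
  case (add f g)
  then show ?case by (simp add: kq_add_def)
qed


end

lemma kq_zero_apply[simp]: "kq_zero p = 0" by (simp add: kq_zero_def)

lemma kq_mult_smult_right: "kq_mult Q f (kq_smult c h) = kq_smult c (kq_mult Q f h)"
  by (rule ext) (simp add: kq_mult_def kq_smult_def sum_distrib_left mult.left_commute split: prod.split)

lemma kq_zero_hom: "kq_zero \<in> kq_hom Q i j n"
  by (simp add: kq_hom_def in_KQ_def kq_zero_def)

lemma kq_smult_hom: "h \<in> kq_hom Q i j n \<Longrightarrow> kq_smult (c::'k::comm_ring_1) h \<in> kq_hom Q i j n"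
proof -
  assume h: "h \<in> kq_hom Q i j n"
  then have "in_KQ Q (kq_smult c h)" by (simp add: kq_hom_def in_KQ_smult)
  moreover have "\<forall>p. kq_smult c h p \<noteq> 0 \<longrightarrow> psrc p = i \<and> ptgt Q p = j \<and> pdeg Q p = n"
    using h unfolding kq_hom_def kq_smult_def mem_Collect_eq by (metis mult_zero_right)
  ultimately show ?thesis by (simp add: kq_hom_def)
qed

lemma path_elem_hom:
  "valid_path Q p \<Longrightarrow> psrc p = i \<Longrightarrow> ptgt Q p = j \<Longrightarrow> pdeg Q p = n \<Longrightarrow> path_elem p \<in> kq_hom Q i j n"
  using in_KQ_path_elem[of Q p] by (auto simp: kq_hom_def path_elem_def split: if_splits)

lemma E_zero:
  assumes "\<And>k l. kq_diff (f k l) (f' k l) \<in> kq_ideal Q R"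
  shows "tw_cohomologous Q R X D n f f'"
  unfolding tw_cohomologous_def mat_equiv_def
proof (rule bexI[of _ mat_zero])
  show "mat_zero \<in> tw_mor Q X X (n - 1)"
    by (simp add: tw_mor_def mat_zero_def kq_zero_hom)
  show "\<forall>k l. kq_diff (kq_diff (f k l) (f' k l)) (tw_d Q X D (n - 1) mat_zero k l) \<in> kq_ideal Q R"
  proof (intro allI)
    fix k l
    show "kq_diff (kq_diff (f k l) (f' k l)) (tw_d Q X D (n - 1) mat_zero k l) \<in> kq_ideal Q R"
      by (rule ideal_cong[OF assms[of k l]])
         (simp add: tw_d_def tw_comp_def mat_zero_def kq_diff_def)
  qed
qed

lemma lt2: "(k::nat) < 2 \<longleftrightarrow> k = 0 \<or> k = 1" by auto

context kron
begin

lemma main: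
  fixes mu :: "'k::field"
  assumes mu: "mu \<noteq> 0"
  shows "H_End_iso_dual_numbers Q RR (kron_obj Q al v1 v2) (kron_diff al be v1 mu)"
proof -
  define X where "X = kron_obj Q al v1 v2"
  define D where "D = kron_diff al be v1 mu"
  define d where "d = qdeg Q al"
  define e1 :: "('v,'a,'k) kq" where "e1 = path_elem (v1, [])"
  define e2 :: "('v,'a,'k) kq" where "e2 = path_elem (v2, [])"
  define pa :: "('v,'a,'k) kq" where "pa = path_elem (v1, [al])"
  define pb :: "('v,'a,'k) kq" where "pb = path_elem (v1, [be])"
  define a where "a = kq_add pa (kq_smult mu pb)"
  have Xl: "length X = 2" "X ! 0 = (v2, d)" "X ! 1 = (v1, 1)" "X ! Suc 0 = (v1, 1)" by (simp_all add: X_def kron_obj_def d_def)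
  have Dk: "D k l = (if k = 0 \<and> l = 1 then a else kq_zero)" for k l
    by (simp add: D_def kron_diff_def a_def pa_def pb_def)
  have comp: "tw_comp Q (length X) g f k l p = kq_mult Q (g k 0) (f 0 l) p + kq_mult Q (g k 1) (f 1 l) p"
    for g f :: "('v,'a,'k) kq_mat" and k l p
    by (simp add: Xl tw_comp_def numeral_2_eq_2)
  have twd: "tw_d Q X D n f k l p = (if k = 0 then kq_mult Q a (f 1 l) p else 0)
      - (if even n then 1 else -1) * (if l = 1 then kq_mult Q (f k 0) a p else 0)"
    for n and f :: "('v,'a,'k) kq_mat" and k l p
    unfolding tw_d_def comp Dk by simp
  have mor: "f \<in> tw_mor Q X X n \<longleftrightarrow> f 0 0 \<in> kq_hom Q v2 v2 n \<and> f 0 1 \<in> kq_hom Q v1 v2 (n - 1 + d) \<and>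
      f 1 0 \<in> kq_hom Q v2 v1 (n - d + 1) \<and> f 1 1 \<in> kq_hom Q v1 v1 n \<and>
      (\<forall>k l. \<not> (k < 2 \<and> l < 2) \<longrightarrow> f k l = kq_zero)"
    for f :: "('v,'a,'k) kq_mat" and n
  proof -
    have A: "(\<forall>k l. k < 2 \<and> l < 2 \<longrightarrow> P k l) \<longleftrightarrow> P 0 0 \<and> P 0 1 \<and> P 1 0 \<and> P 1 1" for P :: "nat \<Rightarrow> nat \<Rightarrow> bool"
      unfolding lt2 by blast
    have B: "(\<forall>k l. \<not> (k < 2 \<and> l < 2) \<longrightarrow> P k l) \<longleftrightarrow> (\<forall>k l. \<not> (k < 2 \<and> l < 2) \<longrightarrow> P k l)" for P :: "nat \<Rightarrow> nat \<Rightarrow> bool"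
      by blast
    show ?thesis unfolding tw_mor_def Xl(1) A mem_Collect_eq by (simp add: Xl)
  qed
  have av: "a (w, []) = 0" "a (v1, [al]) = 1" "a (v1, [be]) = mu" for w
    using Kf by (auto simp: a_def pa_def pb_def kq_add_def kq_smult_def path_elem_def)
  have pav: "pa (w, []) = 0" "pa (v1, [al]) = 1" "pa (v1, [be]) = 0" for w
    using Kf by (auto simp: pa_def path_elem_def)
  have pbv: "pb (w, []) = 0" "pb (v1, [al]) = 0" "pb (v1, [be]) = 1" for w
    using Kf by (auto simp: pb_def path_elem_def)
  have e2a: "kq_mult Q e2 a = a" and ae1: "kq_mult Q a e1 = a"
    using Kf by (simp_all add: a_def e1_def e2_def pa_def pb_def kq_mult_add_right kq_mult_add_left
        kq_mult_smult_right kq_mult_smult_left path_elem_mult ptgt_def)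
  have e22: "kq_mult Q e2 e2 = e2" and e11: "kq_mult Q e1 e1 = e1"
    by (simp_all add: e1_def e2_def path_elem_mult ptgt_def)
  have e2pa: "kq_mult Q e2 pa = pa" and pae1: "kq_mult Q pa e1 = pa"
    using Kf by (simp_all add: e1_def e2_def pa_def path_elem_mult ptgt_def)
  have he1: "e1 \<in> kq_hom Q v1 v1 0" unfolding e1_def
    by (rule path_elem_hom) (simp_all add: valid_path_iff v1V psrc_def ptgt_def pdeg_def)
  have he2: "e2 \<in> kq_hom Q v2 v2 0" unfolding e2_def
    by (rule path_elem_hom) (simp_all add: valid_path_iff v2V psrc_def ptgt_def pdeg_def)
  have hpa: "pa \<in> kq_hom Q v1 v2 d" unfolding pa_def
    by (rule path_elem_hom) (use Kf AgA v1V in \<open>auto simp: valid_path_iff psrc_def ptgt_def pdeg_def d_def\<close>)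
  have lowal: "\<forall>z\<in>set [al]. qs Q z \<notin> Lv \<and> qt Q z \<notin> Lv" and lowbe: "\<forall>z\<in>set [be]. qs Q z \<notin> Lv \<and> qt Q z \<notin> Lv"
    using Kf by auto
  define u :: "('v,'a,'k) kq_mat" where
    "u = (\<lambda>k l. if k = 0 \<and> l = 0 then e2 else if k = 1 \<and> l = 1 then e1 else kq_zero)"
  define x :: "('v,'a,'k) kq_mat" where
    "x = (\<lambda>k l. if k = 0 \<and> l = 1 then pa else kq_zero)"
  show ?thesis
    unfolding H_End_iso_dual_numbers_def graded_iso_dual_numbers_def X_def[symmetric] D_def[symmetric]
  proof (rule exI[of _ u], rule exI[of _ x], intro conjI)
    show "tw_cocycle Q RR X D 0 u"
      unfolding tw_cocycle_def mat_equiv_def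
    proof (intro conjI allI)
      show "u \<in> tw_mor Q X X 0" unfolding mor by (simp add: u_def he1 he2 kq_zero_hom)
      fix k l
      show "kq_diff (tw_d Q X D 0 u k l) (mat_zero k l) \<in> kq_ideal Q RR"
        by (rule ideal_zeroI) (auto simp: kq_diff_def mat_zero_def twd u_def e2a ae1)
    qed
    show "tw_cocycle Q RR X D 1 x"
      unfolding tw_cocycle_def mat_equiv_def
    proof (intro conjI allI)
      show "x \<in> tw_mor Q X X 1" unfolding mor by (simp add: x_def hpa kq_zero_hom)
      fix k l
      show "kq_diff (tw_d Q X D 1 x k l) (mat_zero k l) \<in> kq_ideal Q RR"
        by (rule ideal_zeroI) (auto simp: kq_diff_def mat_zero_def twd x_def)
    qed
    show "tw_cohomologous Q RR X D 0 (tw_comp Q (length X) u u) u"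
      by (rule E_zero, rule ideal_zeroI) (auto simp: kq_diff_def comp u_def e22 e11)
    show "tw_cohomologous Q RR X D 1 (tw_comp Q (length X) u x) x"
      by (rule E_zero, rule ideal_zeroI) (auto simp: kq_diff_def comp u_def x_def e2pa)
    show "tw_cohomologous Q RR X D 1 (tw_comp Q (length X) x u) x"
      by (rule E_zero, rule ideal_zeroI) (auto simp: kq_diff_def comp u_def x_def pae1)
    show "tw_cohomologous Q RR X D 2 (tw_comp Q (length X) x x) mat_zero"
      by (rule E_zero, rule ideal_zeroI) (auto simp: kq_diff_def comp x_def mat_zero_def)
    show "\<forall>f. tw_cocycle Q RR X D 0 f \<longrightarrow> (\<exists>c. tw_cohomologous Q RR X D 0 f (mat_smult c u))"
    proof (intro allI impI)
      fix f assume Z: "tw_cocycle Q RR X D 0 f"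
      then have fm: "f \<in> tw_mor Q X X 0"
        and fc: "\<forall>k l. kq_diff (tw_d Q X D 0 f k l) (mat_zero k l) \<in> kq_ideal Q RR"
        by (auto simp: tw_cocycle_def mat_equiv_def)
      have h00: "f 0 0 \<in> kq_hom Q v2 v2 0" and h01: "f 0 1 \<in> kq_hom Q v1 v2 (0 - 1 + d)"
        and h10: "f 1 0 \<in> kq_hom Q v2 v1 (0 - d + 1)" and h11: "f 1 1 \<in> kq_hom Q v1 v1 0"
        and hz: "\<forall>k l. \<not> (k < 2 \<and> l < 2) \<longrightarrow> f k l = kq_zero"
        using fm unfolding mor by auto
      have "kq_diff (tw_d Q X D 0 f 0 1) (mat_zero 0 1) (v1, [al]) = 0"
        by (rule ideal_low[OF fc[rule_format]]) (use lowal in simp_all)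
      then have c11: "f 1 1 (v1, []) = f 0 0 (v2, [])"
        using Kf by (simp add: kq_diff_def mat_zero_def twd kq_mult_single av)
      have z01: "f 0 1 (v1, [al]) = 0" "f 0 1 (v1, [be]) = 0"
        using hom_deg1[OF h01] Kf by (auto simp: d_def)
      show "\<exists>c. tw_cohomologous Q RR X D 0 f (mat_smult c u)"
      proof (rule exI[of _ "f 0 0 (v2, [])"], rule E_zero)
        fix k l
        show "kq_diff (f k l) (mat_smult (f 0 0 (v2, [])) u k l) \<in> kq_ideal Q RR"
        proof (cases "k < 2 \<and> l < 2")
          case False
          then show ?thesis using hz by (intro ideal_zeroI) (auto simp: kq_diff_def mat_smult_def u_def kq_smult_def)
        next
          case True
          then have "k = 0 \<or> k = 1" "l = 0 \<or> l = 1" by auto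
          then consider "k = 0" "l = 0" | "k = 0" "l = 1" | "k = 1" "l = 0" | "k = 1" "l = 1"
            by blast
          then show ?thesis
          proof cases
            case 1
            then show ?thesis using H22[OF h00] by (simp add: mat_smult_def u_def e2_def)
          next
            case 2
            show ?thesis
              by (rule ideal_cong[OF H12[OF h01]]) (use 2 z01 in \<open>simp add: kq_diff_def kq_add_def kq_smult_def mat_smult_def u_def\<close>)
          next
            case 3
            show ?thesis
              by (rule ideal_cong[OF H21[OF h10]]) (use 3 in \<open>simp add: kq_diff_def kq_smult_def mat_smult_def u_def\<close>)
          next
            case 4
            then show ?thesis using H11[OF h11] c11 by (simp add: mat_smult_def u_def e1_def)
          qed
        qed
      qed
    qed
    show "\<forall>f. tw_cocycle Q RR X D 1 f \<longrightarrow> (\<exists>c. tw_cohomologous Q RR X D 1 f (mat_smult c x))"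
    proof (intro allI impI)
      fix f assume Z: "tw_cocycle Q RR X D 1 f"
      then have fm: "f \<in> tw_mor Q X X 1" by (auto simp: tw_cocycle_def)
      have h00: "f 0 0 \<in> kq_hom Q v2 v2 1" and h01: "f 0 1 \<in> kq_hom Q v1 v2 (1 - 1 + d)"
        and h10: "f 1 0 \<in> kq_hom Q v2 v1 (1 - d + 1)" and h11: "f 1 1 \<in> kq_hom Q v1 v1 1"
        and hz: "\<forall>k l. \<not> (k < 2 \<and> l < 2) \<longrightarrow> f k l = kq_zero"
        using fm unfolding mor by auto
      have z00: "f 0 0 (v2, []) = 0" using hom_deg0[OF h00] by simp
      have z11: "f 1 1 (v1, []) = 0" using hom_deg0[OF h11] by simp
      define xa where "xa = f 0 1 (v1, [al])"
      define yb where "yb = f 0 1 (v1, [be])"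
      define t where "t = - yb / mu"
      define c where "c = xa + t"
      have tmu: "t * mu = - yb" using mu by (simp add: t_def)
      define g :: "('v,'a,'k) kq_mat" where "g = (\<lambda>k l. if k = 0 \<and> l = 0 then kq_smult t e2 else kq_zero)"
      have gm: "g \<in> tw_mor Q X X (1 - 1)"
        unfolding mor by (simp add: g_def kq_zero_hom kq_smult_hom[OF he2])
      have ga: "kq_mult Q (kq_smult t e2) a = kq_smult t a" by (simp add: kq_mult_smult_left e2a)
      show "\<exists>c. tw_cohomologous Q RR X D 1 f (mat_smult c x)"
        unfolding tw_cohomologous_def mat_equiv_def
      proof (rule exI[of _ c], rule bexI[OF _ gm], intro allI)
        fix k l
        show "kq_diff (kq_diff (f k l) (mat_smult c x k l)) (tw_d Q X D (1 - 1) g k l) \<in> kq_ideal Q RR"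
        proof (cases "k < 2 \<and> l < 2")
          case False
          then show ?thesis using hz
            by (intro ideal_zeroI) (auto simp: kq_diff_def mat_smult_def x_def kq_smult_def twd g_def)
        next
          case True
          then have "k = 0 \<or> k = 1" "l = 0 \<or> l = 1" by auto
          then consider "k = 0" "l = 0" | "k = 0" "l = 1" | "k = 1" "l = 0" | "k = 1" "l = 1"
            by blast
          then show ?thesis
          proof cases
            case 1
            show ?thesis
              by (rule ideal_cong[OF H22[OF h00]])
                 (use 1 z00 in \<open>simp add: kq_diff_def kq_smult_def mat_smult_def x_def twd g_def\<close>)
          next
            case 2
            show ?thesis
            proof (rule ideal_cong[OF H12[OF h01]])
              fix p
              have A: "a p = pa p + mu * pb p" by (simp add: a_def kq_add_def kq_smult_def)
              have T: "tw_d Q X D (1 - 1) g 0 1 p = - kq_smult t a p" by (simp add: twd g_def ga)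
              have L: "kq_diff (kq_diff (f 0 1) (mat_smult c x 0 1)) (tw_d Q X D (1 - 1) g 0 1) p
                  = f 0 1 p - c * pa p + t * (pa p + mu * pb p)"
                unfolding kq_diff_def T by (simp add: mat_smult_def x_def kq_smult_def A)
              have R: "kq_diff (f 0 1) (kq_add (kq_smult (f 0 1 (v1, [al])) (path_elem (v1, [al])))
                  (kq_smult (f 0 1 (v1, [be])) (path_elem (v1, [be])))) p = f 0 1 p - (xa * pa p + yb * pb p)"
                by (simp add: kq_diff_def kq_add_def kq_smult_def pa_def pb_def xa_def yb_def)
              have tm: "t * mu * pb p = - yb * pb p" using tmu by simp
              show "kq_diff (kq_diff (f k l) (mat_smult c x k l)) (tw_d Q X D (1 - 1) g k l) p =
                kq_diff (f 0 1) (kq_add (kq_smult (f 0 1 (v1, [al])) (path_elem (v1, [al])))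
                  (kq_smult (f 0 1 (v1, [be])) (path_elem (v1, [be])))) p"
                unfolding 2 L R using tm by (simp add: c_def algebra_simps)
            qed
          next
            case 3
            show ?thesis
              by (rule ideal_cong[OF H21[OF h10]])
                 (use 3 in \<open>simp add: kq_diff_def kq_smult_def mat_smult_def x_def twd g_def\<close>)
          next
            case 4
            show ?thesis
              by (rule ideal_cong[OF H11[OF h11]])
                 (use 4 z11 in \<open>simp add: kq_diff_def kq_smult_def mat_smult_def x_def twd g_def\<close>)
          qed
        qed
      qed
    qed
    show "\<forall>n f. n \<noteq> 0 \<and> n \<noteq> 1 \<and> tw_cocycle Q RR X D n f \<longrightarrow> tw_cohomologous Q RR X D n f mat_zero"
    proof (intro allI impI)
      fix n f assume nZ: "n \<noteq> 0 \<and> n \<noteq> 1 \<and> tw_cocycle Q RR X D n f"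
      then have fm: "f \<in> tw_mor Q X X n" by (auto simp: tw_cocycle_def)
      have h00: "f 0 0 \<in> kq_hom Q v2 v2 n" and h01: "f 0 1 \<in> kq_hom Q v1 v2 (n - 1 + d)"
        and h10: "f 1 0 \<in> kq_hom Q v2 v1 (n - d + 1)" and h11: "f 1 1 \<in> kq_hom Q v1 v1 n"
        and hz: "\<forall>k l. \<not> (k < 2 \<and> l < 2) \<longrightarrow> f k l = kq_zero"
        using fm unfolding mor by auto
      have z01: "f 0 1 (v1, [al]) = 0" "f 0 1 (v1, [be]) = 0"
        using hom_deg1[OF h01] Kf nZ by (auto simp: d_def)
      have z00: "f 0 0 (v2, []) = 0" using hom_deg0[OF h00] nZ by simp
      have z11: "f 1 1 (v1, []) = 0" using hom_deg0[OF h11] nZ by simp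
      show "tw_cohomologous Q RR X D n f mat_zero"
      proof (rule E_zero)
        fix k l
        show "kq_diff (f k l) (mat_zero k l) \<in> kq_ideal Q RR"
        proof (cases "k < 2 \<and> l < 2")
          case False
          then show ?thesis using hz by (intro ideal_zeroI) (auto simp: kq_diff_def mat_zero_def)
        next
          case True
          then have "k = 0 \<or> k = 1" "l = 0 \<or> l = 1" by auto
          then consider "k = 0" "l = 0" | "k = 0" "l = 1" | "k = 1" "l = 0" | "k = 1" "l = 1"
            by blast
          then show ?thesis
          proof cases
            case 1
            show ?thesis
              by (rule ideal_cong[OF H22[OF h00]]) (use 1 z00 in \<open>simp add: kq_diff_def kq_smult_def mat_zero_def\<close>)
          next
            case 2
            show ?thesis
              by (rule ideal_cong[OF H12[OF h01]]) (use 2 z01 in \<open>simp add: kq_diff_def kq_add_def kq_smult_def mat_zero_def\<close>)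
          next
            case 3
            show ?thesis
              by (rule ideal_cong[OF H21[OF h10]]) (use 3 in \<open>simp add: kq_diff_def mat_zero_def\<close>)
          next
            case 4
            show ?thesis
              by (rule ideal_cong[OF H11[OF h11]]) (use 4 z11 in \<open>simp add: kq_diff_def kq_smult_def mat_zero_def\<close>)
          qed
        qed
      qed
    qed
    show "\<forall>c. tw_cohomologous Q RR X D 0 (mat_smult c u) mat_zero \<longrightarrow> c = 0"
    proof (intro allI impI)
      fix c assume "tw_cohomologous Q RR X D 0 (mat_smult c u) mat_zero"
      then obtain g where E: "\<forall>k l. kq_diff (kq_diff (mat_smult c u k l) (mat_zero k l)) (tw_d Q X D (0 - 1) g k l)
          \<in> kq_ideal Q RR"
        unfolding tw_cohomologous_def mat_equiv_def by blast
      have "kq_diff (kq_diff (mat_smult c u 0 0) (mat_zero 0 0)) (tw_d Q X D (0 - 1) g 0 0) (v2, []) = 0"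
        by (rule ideal_low[OF E[rule_format]]) simp_all
      then show "c = 0"
        by (simp add: kq_diff_def mat_smult_def u_def kq_smult_def twd kq_mult_Nil av e2_def path_elem_def mat_zero_def)
    qed
    show "\<forall>c. tw_cohomologous Q RR X D 1 (mat_smult c x) mat_zero \<longrightarrow> c = 0"
    proof (intro allI impI)
      fix c assume "tw_cohomologous Q RR X D 1 (mat_smult c x) mat_zero"
      then obtain g where E: "\<forall>k l. kq_diff (kq_diff (mat_smult c x k l) (mat_zero k l)) (tw_d Q X D (1 - 1) g k l)
          \<in> kq_ideal Q RR"
        unfolding tw_cohomologous_def mat_equiv_def by blast
      have "kq_diff (kq_diff (mat_smult c x 0 1) (mat_zero 0 1)) (tw_d Q X D (1 - 1) g 0 1) (v1, [al]) = 0"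
        by (rule ideal_low[OF E[rule_format]]) (use lowal in simp_all)
      then have ea: "c - (g 1 1 (v1, []) - g 0 0 (v2, [])) = 0"
        using Kf by (simp add: kq_diff_def mat_smult_def x_def kq_smult_def twd kq_mult_single av pav mat_zero_def)
      have "kq_diff (kq_diff (mat_smult c x 0 1) (mat_zero 0 1)) (tw_d Q X D (1 - 1) g 0 1) (v1, [be]) = 0"
        by (rule ideal_low[OF E[rule_format]]) (use lowbe in simp_all)
      then have eb: "mu * (g 1 1 (v1, []) - g 0 0 (v2, [])) = 0"
        using Kf by (simp add: kq_diff_def mat_smult_def x_def kq_smult_def twd kq_mult_single av pav mat_zero_def
            algebra_simps) metis
      then have "g 1 1 (v1, []) - g 0 0 (v2, []) = 0" using mu by simp
      then show "c = 0" using ea by simp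
    qed
  qed
qed

end

theorem lemma5p4:
  fixes Q :: "('v,'a) gquiver"
    and Ag :: "'a set" and Lv :: "'v set"
    and gam alp alm bep bem :: "'v \<Rightarrow> 'a"
    and Ig :: "('a \<times> 'a) set"
    and al be :: 'a and v1 v2 :: 'v
    and mu :: "'k::field"
  assumes "graded_pinched_gentle Q Ag Lv gam alp alm bep bem Ig"
    and "graded_kronecker Q Ag Lv al be v1 v2"
    and "acyclic_kronecker Q Ag Ig al be"
    and "mu \<noteq> 0"
  shows "H_End_iso_dual_numbers Q (pg_rels Q Lv gam alp alm bep bem Ig)
           (kron_obj Q al v1 v2) (kron_diff al be v1 mu)"
proof -
  interpret kron Q Ag Lv gam alp alm bep bem Ig al be v1 v2
    using assms(1-3) by (rule kron.intro)
  show ?thesis using main[OF assms(4)] .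
qed

end
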